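(* Let $0<\varepsilon\le 0.1$, let $\Box$ be a closed axis-parallel square of side length $\varepsilon$ with center $o$, let $R\subseteq\Box$ be a nonempty circular domain, let $\Lambda\ge 10$ be an integer, and let $\gamma_1,\dots,\gamma_\Lambda$ be a $\Lambda$-decomposition of $\partial(R\oplus D)$ with division points $p_1,\dots,p_\Lambda$. Set $\varepsilon'=7(\tfrac1\Lambda+\varepsilon)$. Then for every $i\in[\Lambda]$, $\gamma_i$ is $\vec v$-monotone for every $\vec v\in\mathbb{S}^1$ with $\varepsilon'\le\mathsf{ang}(\overrightarrow{op_i},\vec v)\le\pi-\varepsilon'$ or $\pi+\varepsilon'\le\mathsf{ang}(\overrightarrow{op_i},\vec v)\le2\pi-\varepsilon'$.
   Context: A circular arc is a connected portion of a circle (segments included); a circular domain is a closed subset of $\mathbb{R}^2$ whose boundary consists of finitely many circular arcs intersecting only at endpoints. $D$ is the closed unit disk at the origin, $\oplus$ is Minkowski sum. Every ray from $o$ meets $\partial(R\oplus D)$ in exactly one point. For nonzero vectors $\vec u,\vec v$, $\mathsf{ang}(\vec u,\vec v)\in[0,2\pi)$ is the clockwise ordered angle from $\vec u$ to $\vec v$. A $\Lambda$-decomposition of $\partial(R\oplus D)$: shoot $\Lambda$ rays from $o$ dividing the full angle around $o$ into $\Lambda$ angles of size $2\pi/\Lambda$; they meet $\partial(R\oplus D)$ at points $p_1,\dots,p_\Lambda$ with $\mathsf{ang}(\overrightarrow{op_{i-1}},\overrightarrow{op_i})=2\pi/\Lambda$ (indices mod $\Lambda$, $p_0=p_\Lambda$);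 $\gamma_i$ is the portion of $\partial(R\oplus D)$ between $p_{i-1}$ and $p_i$ (the one containing no other $p_j$). A curve $\gamma$ is $\vec v$-monotone if there is a homeomorphism $f:[0,1]\to\gamma$ with $\langle\vec v,f(a)\rangle<\langle\vec v,f(b)\rangle$ whenever $a<b$. *)

theory Defs
  imports "HOL-Analysis.Analysis"
begin

text \<open>The plane is modelled by the type complex (x = Re, y = Im, standard orientation).\<close>

definition circular_arc :: "complex set \<Rightarrow> bool" where
  "circular_arc A \<longleftrightarrow>
     (\<exists>g. arc g \<and> path_image g = A) \<and>
     ((\<exists>c r. r > 0 \<and> A \<subseteq> sphere c r) \<or> collinear A)"

definition arc_endpoints :: "complex set \<Rightarrow> complex set" where
  "arc_endpoints A = {x. \<exists>g. arc g \<and> path_image g = A \<and> (x = pathstart g \<or> x = pathfinish g)}"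

definition circular_domain :: "complex set \<Rightarrow> bool" where
  "circular_domain R \<longleftrightarrow> closed R \<and>
     (\<exists>\<A>. finite \<A> \<and> (\<forall>A\<in>\<A>. circular_arc A) \<and> frontier R = \<Union>\<A> \<and>
        (\<forall>A\<in>\<A>. \<forall>B\<in>\<A>. A \<noteq> B \<longrightarrow> A \<inter> B \<subseteq> arc_endpoints A \<inter> arc_endpoints B))"

definition minkowski_sum :: "complex set \<Rightarrow> complex set \<Rightarrow> complex set" (infixl "\<oplus>" 65) where
  "A \<oplus> B = {a + b | a b. a \<in> A \<and> b \<in> B}"

definition unit_disk :: "complex set" where
  "unit_disk = cball 0 1"

definition axis_square :: "complex \<Rightarrow> real \<Rightarrow> complex set" where
  "axis_square ctr s = {z. \<bar>Re z - Re ctr\<bar> \<le> s / 2 \<and> \<bar>Im z - Im ctr\<bar> \<le> s / 2}"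

text \<open>Clockwise ordered angle from u to v, in [0, 2 pi): the theta with
  v/|v| = (u/|u|) * exp(-i theta), i.e. theta = Arg2pi (u / v).\<close>
definition ang :: "complex \<Rightarrow> complex \<Rightarrow> real" where
  "ang u v = Arg2pi (u / v)"

definition monotone_in_dir :: "complex \<Rightarrow> complex set \<Rightarrow> bool" where
  "monotone_in_dir v \<gamma> \<longleftrightarrow>
     (\<exists>f g. homeomorphism {0..1::real} \<gamma> f g \<and>
        (\<forall>a b. 0 \<le> a \<longrightarrow> a < b \<longrightarrow> b \<le> 1 \<longrightarrow> inner v (f a) < inner v (f b)))"

end

theory Submission
  imports Defs
begin

definition T :: "'a::real_inner \<Rightarrow> 'a \<Rightarrow> real" where
  "T a e = inner a e + sqrt ((inner a e)\<^sup>2 + 1 - (norm a)\<^sup>2)"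

lemma sqrt_diff_le:
  fixes s1 s2 k :: real
  assumes "k > 0"
  shows "\<bar>sqrt (s1\<^sup>2 + k) - sqrt (s2\<^sup>2 + k)\<bar> \<le> \<bar>s1 - s2\<bar>"
proof -
  define A where "A = sqrt (s1\<^sup>2 + k)"
  define B where "B = sqrt (s2\<^sup>2 + k)"
  have A: "A \<ge> \<bar>s1\<bar>" "A > 0" "A\<^sup>2 = s1\<^sup>2 + k" unfolding A_def using assms
    by (auto intro: real_le_rsqrt add_nonneg_pos)
  have B: "B \<ge> \<bar>s2\<bar>" "B > 0" "B\<^sup>2 = s2\<^sup>2 + k" unfolding B_def using assms
    by (auto intro: real_le_rsqrt add_nonneg_pos)
  have "(A - B) * (A + B) = (s1 - s2) * (s1 + s2)" using A(3) B(3) by (simp add: algebra_simps power2_eq_square)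
  hence "\<bar>A - B\<bar> * (A + B) = \<bar>s1 - s2\<bar> * \<bar>s1 + s2\<bar>" using A B
    by (metis abs_mult abs_of_pos add_pos_pos)
  also have "\<dots> \<le> \<bar>s1 - s2\<bar> * (A + B)" using A B by (intro mult_left_mono) auto
  finally have "\<bar>A - B\<bar> * (A + B) \<le> \<bar>s1 - s2\<bar> * (A + B)" .
  thus ?thesis using A B unfolding A_def[symmetric] B_def[symmetric]
    by (meson add_pos_pos mult_le_cancel_right_pos)
qed

lemma T_lip:
  fixes a e1 e2 :: "'a::real_inner"
  assumes "norm a < 1"
  shows "\<bar>T a e1 - T a e2\<bar> \<le> 2 * norm a * norm (e1 - e2)"
proof -
  have k: "1 - (norm a)\<^sup>2 > 0" using assms
    by (simp add: abs_square_less_1)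
  have s: "\<bar>inner a e1 - inner a e2\<bar> \<le> norm a * norm (e1 - e2)"
    by (metis inner_diff_right Cauchy_Schwarz_ineq2)
  have "\<bar>T a e1 - T a e2\<bar> \<le> \<bar>inner a e1 - inner a e2\<bar> + \<bar>sqrt ((inner a e1)\<^sup>2 + (1 - (norm a)\<^sup>2)) - sqrt ((inner a e2)\<^sup>2 + (1 - (norm a)\<^sup>2))\<bar>"
    unfolding T_def by (simp add: add_diff_eq)
  also have "\<dots> \<le> 2 * \<bar>inner a e1 - inner a e2\<bar>" using sqrt_diff_le[OF k] by simp
  finally show ?thesis using s by simp
qed

lemma norm_sq_ray:
  fixes a e :: "'a::real_inner"
  assumes "norm e = 1"
  shows "(norm (\<rho> *\<^sub>R e - a))\<^sup>2 = \<rho>\<^sup>2 - 2 * \<rho> * inner a e + (norm a)\<^sup>2"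
proof -
  have ee: "inner e e = 1" using assms by (metis norm_eq_sqrt_inner real_sqrt_eq_1_iff)
  have "(norm (\<rho> *\<^sub>R e - a))\<^sup>2 = inner (\<rho> *\<^sub>R e - a) (\<rho> *\<^sub>R e - a)"
    by (simp add: power2_norm_eq_inner)
  also have "\<dots> = \<rho>\<^sup>2 * inner e e - 2 * \<rho> * inner a e + inner a a"
    by (simp add: inner_diff_left inner_diff_right inner_commute power2_eq_square algebra_simps)
  finally show ?thesis using ee by (simp add: power2_norm_eq_inner)
qed

lemma ray_le:
  fixes a e :: "'a::real_inner"
  assumes "norm a < 1" "norm e = 1" "0 \<le> \<rho>" "norm (\<rho> *\<^sub>R e - a) \<le> 1"
  shows "\<rho> \<le> T a e"
proof -
  have "(norm (\<rho> *\<^sub>R e - a))\<^sup>2 = \<rho>\<^sup>2 - 2 * \<rho> * inner a e + (norm a)\<^sup>2"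
    using norm_sq_ray[OF assms(2)] .
  moreover have "(norm (\<rho> *\<^sub>R e - a))\<^sup>2 \<le> 1" using assms(4) by (simp add: power_le_one)
  ultimately have "(\<rho> - inner a e)\<^sup>2 \<le> (inner a e)\<^sup>2 + 1 - (norm a)\<^sup>2"
    by (simp add: power2_eq_square algebra_simps)
  hence "\<rho> - inner a e \<le> sqrt ((inner a e)\<^sup>2 + 1 - (norm a)\<^sup>2)"
    using real_le_rsqrt by (meson abs_le_D1 real_sqrt_abs real_sqrt_le_mono order_trans)
  thus ?thesis unfolding T_def by simp
qed

lemma ray_lt:
  fixes a e :: "'a::real_inner"
  assumes "norm a < 1" "norm e = 1" "0 \<le> \<rho>" "\<rho> < T a e"
  shows "norm (\<rho> *\<^sub>R e - a) < 1"
proof -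
  have k: "1 - (norm a)\<^sup>2 > 0" using assms
    by (simp add: abs_square_less_1)
  define s where "s = inner a e"
  define q where "q = sqrt (s\<^sup>2 + 1 - (norm a)\<^sup>2)"
  have q: "q > \<bar>s\<bar>" "q\<^sup>2 = s\<^sup>2 + 1 - (norm a)\<^sup>2" unfolding q_def using k
    by (auto intro!: real_less_rsqrt) (smt (verit) zero_le_power2)
  have "\<rho> - s < q" using assms(4) unfolding T_def s_def[symmetric] q_def[symmetric] by simp
  moreover have "- q < \<rho> - s" using q assms(3) by linarith
  ultimately have "\<bar>\<rho> - s\<bar> < q" by linarith
  hence "\<bar>\<rho> - s\<bar>\<^sup>2 < q\<^sup>2" by (intro power_strict_mono) auto
  hence "(\<rho> - s)\<^sup>2 < q\<^sup>2" by simp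
  hence "(norm (\<rho> *\<^sub>R e - a))\<^sup>2 < 1"
    using norm_sq_ray[OF assms(2), of \<rho> a] q unfolding s_def
    by (simp add: power2_eq_square algebra_simps)
  thus ?thesis by (simp add: power_less_one_iff) 
qed

lemma norm_scaleR_sgn: "norm x *\<^sub>R sgn x = (x::'a::real_normed_vector)"
  by (cases "x = 0") (simp_all add: sgn_div_norm)

lemma ball_sub_S: "r \<in> R \<Longrightarrow> ball r 1 \<subseteq> R \<oplus> unit_disk"
  unfolding minkowski_sum_def unit_disk_def
proof
  fix z assume "r \<in> R" "z \<in> ball r 1"
  thus "z \<in> {a + b |a b. a \<in> R \<and> b \<in> cball 0 1}"
    by (intro CollectI exI[of _ r] exI[of _ "z - r"]) (auto simp: dist_norm norm_minus_commute)
qed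

lemma compact_S: "compact R \<Longrightarrow> compact (R \<oplus> unit_disk)"
  unfolding minkowski_sum_def unit_disk_def by (intro compact_sums) auto

lemma frontier_far:
  assumes "compact R" "r0 \<in> R" "norm (r0 - c) \<le> \<epsilon>" "x \<in> frontier (R \<oplus> unit_disk)"
  shows "1 - \<epsilon> \<le> norm (x - c)"
proof (rule ccontr)
  assume "\<not> ?thesis"
  hence "norm (x - r0) < 1" using norm_triangle_ineq[of "x - c" "c - r0"] assms(3)
    by (simp add: norm_minus_commute)
  hence "x \<in> ball r0 1" by (simp add: dist_norm norm_minus_commute)
  hence "x \<in> interior (R \<oplus> unit_disk)" using interior_maximal[OF ball_sub_S[OF assms(2)]] by auto
  thus False using assms(4) by (simp add: frontier_def)
qed

lemma K1:
  assumes "compact R" "\<forall>r\<in>R. norm (r - c) \<le> \<epsilon>" "\<epsilon> < 1"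
    and x: "x \<in> frontier (R \<oplus> unit_disk)" and y: "y \<in> frontier (R \<oplus> unit_disk)"
    and "x \<noteq> c" "y \<noteq> c"
  shows "norm (y - c) - norm (x - c) \<le> 2 * \<epsilon> * norm (sgn (y - c) - sgn (x - c))"
proof -
  have "y \<in> R \<oplus> unit_disk"
    using frontier_subset_closed[OF compact_imp_closed[OF compact_S[OF assms(1)]]] y by auto
  then obtain r d where rd: "r \<in> R" "norm d \<le> 1" "y = r + d"
    unfolding minkowski_sum_def unit_disk_def by auto
  define a where "a = r - c"
  have a: "norm a \<le> \<epsilon>" "norm a < 1" using assms(2,3) rd(1) unfolding a_def by auto
  have ey: "norm (sgn (y - c)) = 1" "norm (sgn (x - c)) = 1" using assms(6,7) by (auto simp: norm_sgn)
  have "norm (norm (y - c) *\<^sub>R sgn (y - c) - a) \<le> 1"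
    unfolding norm_scaleR_sgn a_def using rd by (simp add: algebra_simps)
  hence ly: "norm (y - c) \<le> T a (sgn (y - c))" by (intro ray_le[OF a(2) ey(1)]) auto
  have lx: "norm (x - c) \<ge> T a (sgn (x - c))"
  proof (rule ccontr)
    assume "\<not> ?thesis"
    hence "norm (norm (x - c) *\<^sub>R sgn (x - c) - a) < 1" by (intro ray_lt[OF a(2) ey(2)]) auto
    hence "x \<in> ball r 1" unfolding norm_scaleR_sgn a_def by (simp add: dist_norm norm_minus_commute algebra_simps)
    hence "x \<in> interior (R \<oplus> unit_disk)" using interior_maximal[OF ball_sub_S[OF rd(1)]] by auto
    thus False using x by (simp add: frontier_def)
  qed
  have "norm (y - c) - norm (x - c) \<le> T a (sgn (y - c)) - T a (sgn (x - c))" using lx ly by simp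
  also have "\<dots> \<le> 2 * norm a * norm (sgn (y - c) - sgn (x - c))" using T_lip[OF a(2)] by (simp add: abs_le_iff)
  also have "\<dots> \<le> 2 * \<epsilon> * norm (sgn (y - c) - sgn (x - c))" using a(1) by (simp add: mult_right_mono)
  finally show ?thesis .
qed

lemma norm_cis_diff: "norm (cis a - cis b) = 2 * \<bar>sin ((a - b) / 2)\<bar>"
proof -
  have "cis a - cis b = cis b * (cis (a - b) - 1)" by (simp add: right_diff_distrib cis_mult)
  hence "norm (cis a - cis b) = norm (exp (\<i> * of_real (a - b)) - 1)" by (simp add: norm_mult cis_conv_exp)
  thus ?thesis using dist_exp_i_1[of "a - b"] by simp
qed

lemma inner_complex_Re: "inner v z = Re (cnj v * z)"
  by (simp add: inner_complex_def)

lemma chord: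
  fixes x y c W v :: complex
  assumes R: "compact R" "\<forall>r\<in>R. norm (r - c) \<le> \<epsilon>" "R \<noteq> {}" "0 < \<epsilon>" "\<epsilon> \<le> 0.1"
    and x: "x \<in> frontier (R \<oplus> unit_disk)" and y: "y \<in> frontier (R \<oplus> unit_disk)"
    and W: "norm W = 1"
    and ex: "sgn (x - c) = W * cis \<psi>x" and ey: "sgn (y - c) = W * cis \<psi>y"
    and psi: "\<alpha> \<le> \<psi>x" "\<psi>x \<le> 2 * \<alpha>" "\<alpha> \<le> \<psi>y" "\<psi>y \<le> 2 * \<alpha>" "\<alpha> \<le> pi"
    and v: "v = W * cis (\<alpha> - \<beta>)"
    and kap: "\<forall>s. 0 \<le> s \<and> s \<le> \<alpha> \<longrightarrow> \<kappa> \<le> \<bar>sin (\<beta> + s)\<bar>" "2 * \<epsilon> < (1 - \<epsilon>) * \<kappa>"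
    and eq: "inner v x = inner v y"
  shows "x = y"
proof -
  obtain r0 where r0: "r0 \<in> R" using R(3) by auto
  have fx: "1 - \<epsilon> \<le> norm (x - c)" and fy: "1 - \<epsilon> \<le> norm (y - c)"
    using frontier_far[OF R(1) r0 _ x] frontier_far[OF R(1) r0 _ y] R(2) r0 by auto
  hence xc: "x \<noteq> c" and yc: "y \<noteq> c" using R(5) by auto
  have K: "\<bar>norm (y - c) - norm (x - c)\<bar> \<le> 2 * \<epsilon> * norm (cis \<psi>y - cis \<psi>x)"
  proof -
    have n: "norm (sgn (y - c) - sgn (x - c)) = norm (cis \<psi>y - cis \<psi>x)"
      unfolding ex ey by (simp add: W norm_mult flip: right_diff_distrib)
    show ?thesis using K1[OF R(1,2) _ x y xc yc] K1[OF R(1,2) _ y x yc xc] R(5) n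
      by (simp add: norm_minus_commute abs_le_iff)
  qed
  define \<rho>x where "\<rho>x = norm (x - c)"
  define \<rho>y where "\<rho>y = norm (y - c)"
  have xe: "x - c = of_real \<rho>x * W * cis \<psi>x" 
    using norm_scaleR_sgn[of "x - c"] unfolding \<rho>x_def ex by (simp add: scaleR_conv_of_real mult.assoc)
  have ye: "y - c = of_real \<rho>y * W * cis \<psi>y" 
    using norm_scaleR_sgn[of "y - c"] unfolding \<rho>y_def ey by (simp add: scaleR_conv_of_real mult.assoc)
  have cW: "cnj W * W = 1" using W by (metis complex_norm_square mult.commute norm_one of_real_1 one_power2)
  have iv: "inner v (of_real \<rho> * W * cis \<psi>) = \<rho> * cos (\<psi> + \<beta> - \<alpha>)" for \<rho> \<psi>
  proof -
    have "cnj v * (of_real \<rho> * W * cis \<psi>) = of_real \<rho> * (cnj W * W) * (cis (\<beta> - \<alpha>) * cis \<psi>)"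
      unfolding v by (simp add: cis_cnj algebra_simps)
    also have "\<dots> = of_real \<rho> * cis (\<psi> + \<beta> - \<alpha>)" using cW by (simp add: cis_mult algebra_simps)
    finally have cc: "cnj v * (of_real \<rho> * W * cis \<psi>) = of_real \<rho> * cis (\<psi> + \<beta> - \<alpha>)" .
    have "inner v (of_real \<rho> * W * cis \<psi>) = Re (cnj v * (of_real \<rho> * W * cis \<psi>))" by (rule inner_complex_Re)
    also have "\<dots> = Re (of_real \<rho> * cis (\<psi> + \<beta> - \<alpha>))" by (simp only: cc)
    finally show ?thesis by simp
  qed
  have "inner v (x - c) = inner v (y - c)" using eq by (simp add: inner_diff_right)
  hence e0: "\<rho>y * cos (\<psi>y + \<beta> - \<alpha>) - \<rho>x * cos (\<psi>x + \<beta> - \<alpha>) = 0" unfolding xe ye iv by simp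
  define M where "M = (\<psi>y + \<psi>x) / 2 + \<beta> - \<alpha>"
  define h where "h = (\<psi>y - \<psi>x) / 2"
  have e1: "(\<psi>x + \<beta> - \<alpha> - (\<psi>y + \<beta> - \<alpha>)) / 2 = - h"
    and e2: "(\<psi>y + \<beta> - \<alpha> + (\<psi>x + \<beta> - \<alpha>)) / 2 = M"
    by (simp_all add: h_def M_def field_simps)
  have "cos (\<psi>y + \<beta> - \<alpha>) - cos (\<psi>x + \<beta> - \<alpha>) = 2 * sin M * sin (- h)"
    by (simp only: cos_diff_cos e1 e2)
  hence cd: "cos (\<psi>y + \<beta> - \<alpha>) - cos (\<psi>x + \<beta> - \<alpha>) = - 2 * sin M * sin h" by simp
  have "\<rho>y * (- 2 * sin M * sin h) = - ((\<rho>y - \<rho>x) * cos (\<psi>x + \<beta> - \<alpha>))"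
    unfolding cd[symmetric] using e0 by (simp add: right_diff_distrib left_diff_distrib)
  hence "\<rho>y * 2 * \<bar>sin M\<bar> * \<bar>sin h\<bar> = \<bar>\<rho>y - \<rho>x\<bar> * \<bar>cos (\<psi>x + \<beta> - \<alpha>)\<bar>"
  proof -
    have "\<bar>\<rho>y * (- 2 * sin M * sin h)\<bar> = \<bar>(\<rho>y - \<rho>x) * cos (\<psi>x + \<beta> - \<alpha>)\<bar>" using \<open>\<rho>y * (- 2 * sin M * sin h) = _\<close> by simp
    moreover have "\<rho>y \<ge> 0" unfolding \<rho>y_def by simp
    ultimately show ?thesis by (simp add: abs_mult)
  qed
  also have "\<dots> \<le> \<bar>\<rho>y - \<rho>x\<bar>" by (simp add: mult_left_le)
  also have "\<dots> \<le> 2 * \<epsilon> * (2 * \<bar>sin h\<bar>)" using K unfolding norm_cis_diff h_def \<rho>x_def \<rho>y_def .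
  finally have A: "\<rho>y * 2 * \<bar>sin M\<bar> * \<bar>sin h\<bar> \<le> 2 * \<epsilon> * (2 * \<bar>sin h\<bar>)" .
  have s0: "0 \<le> (\<psi>y + \<psi>x) / 2 - \<alpha>" using psi by simp
  have s1: "(\<psi>y + \<psi>x) / 2 - \<alpha> \<le> \<alpha>" using psi by simp
  have "\<kappa> \<le> \<bar>sin (\<beta> + ((\<psi>y + \<psi>x) / 2 - \<alpha>))\<bar>" using kap(1) s0 s1 by blast
  moreover have "\<beta> + ((\<psi>y + \<psi>x) / 2 - \<alpha>) = M" unfolding M_def by simp
  ultimately have sM: "\<kappa> \<le> \<bar>sin M\<bar>" by simp
  have "0 < (1 - \<epsilon>) * \<kappa>" using kap(2) R(4) by linarith
  moreover have "0 < 1 - \<epsilon>" using R(5) by simp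
  ultimately have kp: "0 < \<kappa>" using zero_less_mult_pos by blast
  have "sin h = 0"
  proof (rule ccontr)
    assume nz: "sin h \<noteq> 0"
    have "(\<rho>y * \<bar>sin M\<bar>) * (2 * \<bar>sin h\<bar>) \<le> (2 * \<epsilon>) * (2 * \<bar>sin h\<bar>)" using A by (simp add: mult_ac)
    moreover have "0 < 2 * \<bar>sin h\<bar>" using nz by simp
    ultimately have "\<rho>y * \<bar>sin M\<bar> \<le> 2 * \<epsilon>" by (simp only: mult_le_cancel_right_pos)
    moreover have "(1 - \<epsilon>) * \<kappa> \<le> \<rho>y * \<bar>sin M\<bar>"
      using fy sM kap(2) R(5) kp unfolding \<rho>y_def
      by (intro mult_mono) auto
    ultimately show False using kap(2) by linarith
  qed
  moreover have "- 2 * pi < \<psi>y - \<psi>x" "\<psi>y - \<psi>x < 2 * pi" using psi pi_gt_zero by linarith+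
  hence "- pi < h" "h < pi" unfolding h_def by simp_all
  ultimately have "h = 0" using sin_eq_0_pi by blast
  hence "\<psi>x = \<psi>y" unfolding h_def by simp
  hence "\<rho>x = \<rho>y" using K unfolding \<rho>x_def \<rho>y_def by simp
  thus "x = y" using xe ye \<open>\<psi>x = \<psi>y\<close> by (metis diff_add_cancel)
qed

lemma sin_lower:
  fixes x :: real assumes "0 \<le> x" "x \<le> 0.7"
  shows "0.9 * x \<le> sin x"
proof -
  have se: "(\<Sum>m<3. sin_coeff m * x ^ m) = x"
    by (simp add: sin_coeff_def numeral_3_eq_3)
  have f3: "fact 3 = (6::real)" by (simp add: numeral_3_eq_3)
  have "\<bar>sin x - x\<bar> \<le> inverse 6 * \<bar>x\<bar> ^ 3"
    using Maclaurin_sin_bound[of x 3] unfolding se f3 .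
  moreover have "inverse 6 * \<bar>x\<bar> ^ 3 = x ^ 3 / 6" using assms(1) by (simp add: field_simps)
  ultimately have a: "x - x ^ 3 / 6 \<le> sin x" by (simp only: abs_le_iff) linarith
  have "x * x \<le> x * 0.7" using assms by (intro mult_left_mono) simp_all
  moreover have "x * 0.7 \<le> 0.49" using assms(2) by simp
  ultimately have "x * x \<le> 0.49" by linarith
  hence "x * (x * x) \<le> x * 0.49" using assms(1) by (intro mult_left_mono) simp_all
  moreover have "x ^ 3 = x * (x * x)" by (simp add: power3_eq_cube)
  ultimately have "x ^ 3 \<le> x * 0.49" by simp
  thus ?thesis using a assms(1) by simp
qed

lemma sin_mid:
  fixes t d :: real assumes "0 \<le> d" "d \<le> pi / 2" "d \<le> t" "t \<le> pi - d"
  shows "sin d \<le> sin t"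
proof (cases "t \<le> pi / 2")
  case True thus ?thesis using assms by (intro sin_monotone_2pi_le) auto
next
  case False
  hence "sin d \<le> sin (pi - t)" using assms by (intro sin_monotone_2pi_le) auto
  thus ?thesis by simp
qed

lemma kappa_bound:
  fixes \<Lambda> :: nat
  assumes eps: "0 < \<epsilon>" "\<epsilon> \<le> 0.1" and Lam: "\<Lambda> \<ge> 10"
    and beta: "(7 * (1 / \<Lambda> + \<epsilon>) \<le> \<beta> \<and> \<beta> \<le> pi - 7 * (1 / \<Lambda> + \<epsilon>)) \<or>
             (pi + 7 * (1 / \<Lambda> + \<epsilon>) \<le> \<beta> \<and> \<beta> \<le> 2 * pi - 7 * (1 / \<Lambda> + \<epsilon>))"
    and s: "0 \<le> s" "s \<le> 2 * pi / \<Lambda>"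
  shows "sin (7 * \<epsilon>) \<le> \<bar>sin (\<beta> + s)\<bar>"
proof -
  have L: "real \<Lambda> > 0" using Lam by simp
  have "2 * pi \<le> 7" using pi_approx by simp
  hence "2 * pi / \<Lambda> \<le> 7 / \<Lambda>" using L by (simp add: divide_right_mono)
  hence sa: "s \<le> 7 * (1 / \<Lambda>)" using s by simp
  have "0 \<le> 7 * (1 / real \<Lambda>)" by simp
  have d: "0 \<le> 7 * \<epsilon>" "7 * \<epsilon> \<le> pi / 2" using eps pi_approx by auto
  from beta show ?thesis
  proof
    assume b: "7 * (1 / \<Lambda> + \<epsilon>) \<le> \<beta> \<and> \<beta> \<le> pi - 7 * (1 / \<Lambda> + \<epsilon>)"
    have "sin (7 * \<epsilon>) \<le> sin (\<beta> + s)"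
      using b s sa \<open>0 \<le> 7 * (1 / real \<Lambda>)\<close> by (intro sin_mid d) (auto simp: algebra_simps)
    thus ?thesis by simp
  next
    assume b: "pi + 7 * (1 / \<Lambda> + \<epsilon>) \<le> \<beta> \<and> \<beta> \<le> 2 * pi - 7 * (1 / \<Lambda> + \<epsilon>)"
    have "sin (7 * \<epsilon>) \<le> sin (\<beta> + s - pi)"
      using b s sa \<open>0 \<le> 7 * (1 / real \<Lambda>)\<close> by (intro sin_mid d) (auto simp: algebra_simps)
    thus ?thesis by simp
  qed
qed

lemma kappa_ok:
  fixes \<epsilon> :: real
  assumes "0 < \<epsilon>" "\<epsilon> \<le> 0.1"
  shows "2 * \<epsilon> < (1 - \<epsilon>) * sin (7 * \<epsilon>)"
proof -
  have "0.9 * (7 * \<epsilon>) \<le> sin (7 * \<epsilon>)" using assms by (intro sin_lower) simp_all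
  hence "(1 - \<epsilon>) * (0.9 * (7 * \<epsilon>)) \<le> (1 - \<epsilon>) * sin (7 * \<epsilon>)" using assms by (intro mult_left_mono) simp_all
  moreover have "0.9 * (0.9 * (7 * \<epsilon>)) \<le> (1 - \<epsilon>) * (0.9 * (7 * \<epsilon>))" using assms by (intro mult_right_mono) simp_all
  moreover have "2 * \<epsilon> < 0.9 * (0.9 * (7 * \<epsilon>))" using assms by simp
  ultimately show ?thesis by linarith
qed

lemma affine_homeo:
  fixes m M :: real assumes "m < M"
  shows "homeomorphism {0..1} {m..M} (\<lambda>t. m + t * (M - m)) (\<lambda>s. (s - m) / (M - m))"
  unfolding homeomorphism_def
proof (intro conjI ballI)
  show "(\<lambda>t. m + t * (M - m)) ` {0..1} = {m..M}"
  proof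
    show "(\<lambda>t. m + t * (M - m)) ` {0..1} \<subseteq> {m..M}"
    proof
      fix s assume "s \<in> (\<lambda>t. m + t * (M - m)) ` {0..1}"
      then obtain t where t: "t \<in> {0..1}" "s = m + t * (M - m)" by auto
      have "0 \<le> t * (M - m)" "t * (M - m) \<le> 1 * (M - m)" using t assms by (auto intro: mult_right_mono)
      thus "s \<in> {m..M}" using t by auto
    qed
  next
    show "{m..M} \<subseteq> (\<lambda>t. m + t * (M - m)) ` {0..1}"
    proof
      fix s assume s: "s \<in> {m..M}"
      have "s = m + ((s - m) / (M - m)) * (M - m)" using assms by simp
      moreover have "(s - m) / (M - m) \<in> {0..1}" using s assms by auto
      ultimately show "s \<in> (\<lambda>t. m + t * (M - m)) ` {0..1}" by blast
    qed
  qed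
  show "(\<lambda>s. (s - m) / (M - m)) ` {m..M} = {0..1}"
  proof
    show "(\<lambda>s. (s - m) / (M - m)) ` {m..M} \<subseteq> {0..1}" using assms by auto
  next
    show "{0..1} \<subseteq> (\<lambda>s. (s - m) / (M - m)) ` {m..M}"
    proof
      fix t :: real assume t: "t \<in> {0..1}"
      have "t = ((m + t * (M - m)) - m) / (M - m)" using assms by simp
      moreover have "0 \<le> t * (M - m)" "t * (M - m) \<le> 1 * (M - m)" using t assms by (auto intro: mult_right_mono)
      hence "m + t * (M - m) \<in> {m..M}" by auto
      ultimately show "t \<in> (\<lambda>s. (s - m) / (M - m)) ` {m..M}" by blast
    qed
  qed
qed (use assms in \<open>auto intro!: continuous_intros\<close>)

lemma mono_from_inj:
  fixes g :: "real \<Rightarrow> complex"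
  assumes "arc g" "inj_on (inner v) (path_image g)"
  shows "monotone_in_dir v (path_image g)"
proof -
  define K where "K = path_image g"
  have pg: "path g" using assms(1) by (rule arc_imp_path)
  have cK: "compact K" "connected K" unfolding K_def using pg by auto
  have cphi: "continuous_on K (inner v)" by (intro continuous_intros)
  have "compact (inner v ` K)" "connected (inner v ` K)"
    using cK cphi by (auto intro: compact_continuous_image connected_continuous_image)
  then obtain m M where mM: "inner v ` K = {m..M}" using connected_compact_interval_1 by meson
  obtain \<zeta> where hom: "homeomorphism K {m..M} (inner v) \<zeta>"
    using homeomorphism_compact[OF cK(1) cphi mM] assms(2) unfolding K_def by blast
  have "g 0 \<in> K" "g 1 \<in> K" unfolding K_def path_image_def by auto
  moreover have "g 0 \<noteq> g 1" using arc_distinct_ends[OF assms(1)] by (simp add: pathstart_def pathfinish_def)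
  ultimately have "inner v (g 0) \<noteq> inner v (g 1)" "inner v (g 0) \<in> {m..M}" "inner v (g 1) \<in> {m..M}"
    using assms(2) mM unfolding K_def inj_on_def by blast+
  hence mlt: "m < M" by auto
  have h2: "homeomorphism {0..1} K (\<zeta> \<circ> (\<lambda>t. m + t * (M - m))) ((\<lambda>s. (s - m) / (M - m)) \<circ> inner v)"
    by (rule homeomorphism_compose[OF affine_homeo[OF mlt] homeomorphism_symD[OF hom]])
  have val: "inner v ((\<zeta> \<circ> (\<lambda>t. m + t * (M - m))) t) = m + t * (M - m)" if "t \<in> {0..1}" for t
  proof -
    have "m + t * (M - m) \<in> {m..M}" using affine_homeo[OF mlt] that unfolding homeomorphism_def by blast
    thus ?thesis using homeomorphism_apply2[OF hom] by simp
  qed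
  show ?thesis unfolding monotone_in_dir_def K_def[symmetric]
  proof (intro exI conjI allI impI)
    show "homeomorphism {0..1} K (\<zeta> \<circ> (\<lambda>t. m + t * (M - m))) ((\<lambda>s. (s - m) / (M - m)) \<circ> inner v)" by (rule h2)
    fix a b :: real assume ab: "0 \<le> a" "a < b" "b \<le> 1"
    have "a * (M - m) < b * (M - m)" using ab mlt by (intro mult_strict_right_mono) auto
    thus "inner v ((\<zeta> \<circ> (\<lambda>t. m + t * (M - m))) a) < inner v ((\<zeta> \<circ> (\<lambda>t. m + t * (M - m))) b)"
      using val[of a] val[of b] ab by simp
  qed
qed

lemma sgn_arg:
  fixes z P :: complex
  assumes "z \<noteq> 0" "P \<noteq> 0"
  shows "sgn z = (P / of_real (norm P)) * cis (Arg2pi (z / P))"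
proof -
  define q where "q = z / P"
  have q: "q = of_real (norm q) * cis (Arg2pi q)" using Arg2pi_eq[of q] by (simp add: cis_conv_exp)
  have z: "z = P * q" unfolding q_def using assms by simp
  have nq: "norm q \<noteq> 0" using assms unfolding q_def by simp
  have "sgn z = z / of_real (norm z)" by (simp add: sgn_div_norm scaleR_conv_of_real divide_inverse mult.commute)
  also have "\<dots> = P * (of_real (norm q) * cis (Arg2pi q)) / of_real (norm P * norm q)"
    using z q by (metis norm_mult)
  also have "\<dots> = (P / of_real (norm P)) * cis (Arg2pi q)" using nq assms by (simp add: field_simps)
  finally show ?thesis unfolding q_def .
qed

theorem mainTheorem11:
  fixes \<epsilon> :: real and ctr :: complex and R :: "complex set" and \<Lambda> :: nat
    and p :: "nat \<Rightarrow> complex"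
  assumes eps: "0 < \<epsilon>" "\<epsilon> \<le> 0.1"
    and R: "circular_domain R" "R \<noteq> {}" "R \<subseteq> axis_square ctr \<epsilon>"
    and Lam: "\<Lambda> \<ge> 10"
    and p_bd: "\<And>i. i \<in> {1..\<Lambda>} \<Longrightarrow> p i \<in> frontier (R \<oplus> unit_disk) \<and> p i \<noteq> ctr"
    and p_ang: "\<And>i. i \<in> {2..\<Lambda>} \<Longrightarrow> ang (p (i - 1) - ctr) (p i - ctr) = 2 * pi / \<Lambda>"
    and p_ang1: "ang (p \<Lambda> - ctr) (p 1 - ctr) = 2 * pi / \<Lambda>"
  shows "\<forall>i \<in> {1..\<Lambda>}. \<forall>g v.
           (arc g \<and> pathstart g = p (if i = 1 then \<Lambda> else i - 1) \<and> pathfinish g = p i \<and>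
            path_image g \<subseteq> frontier (R \<oplus> unit_disk) \<and>
            (\<forall>j \<in> {1..\<Lambda>}. j \<noteq> i \<and> j \<noteq> (if i = 1 then \<Lambda> else i - 1) \<longrightarrow> p j \<notin> path_image g) \<and>
            norm v = 1 \<and>
            ((7 * (1 / \<Lambda> + \<epsilon>) \<le> ang (p i - ctr) v \<and> ang (p i - ctr) v \<le> pi - 7 * (1 / \<Lambda> + \<epsilon>)) \<or>
             (pi + 7 * (1 / \<Lambda> + \<epsilon>) \<le> ang (p i - ctr) v \<and> ang (p i - ctr) v \<le> 2 * pi - 7 * (1 / \<Lambda> + \<epsilon>))))
           \<longrightarrow> monotone_in_dir v (path_image g)"
proof (intro ballI allI impI)
  fix i g v
  assume i: "i \<in> {1..\<Lambda>}"
  assume H: "arc g \<and> pathstart g = p (if i = 1 then \<Lambda> else i - 1) \<and> pathfinish g = p i \<and>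
            path_image g \<subseteq> frontier (R \<oplus> unit_disk) \<and>
            (\<forall>j \<in> {1..\<Lambda>}. j \<noteq> i \<and> j \<noteq> (if i = 1 then \<Lambda> else i - 1) \<longrightarrow> p j \<notin> path_image g) \<and>
            norm v = 1 \<and>
            ((7 * (1 / \<Lambda> + \<epsilon>) \<le> ang (p i - ctr) v \<and> ang (p i - ctr) v \<le> pi - 7 * (1 / \<Lambda> + \<epsilon>)) \<or>
             (pi + 7 * (1 / \<Lambda> + \<epsilon>) \<le> ang (p i - ctr) v \<and> ang (p i - ctr) v \<le> 2 * pi - 7 * (1 / \<Lambda> + \<epsilon>)))"
  define pr where "pr = (if i = 1 then \<Lambda> else i - 1)"
  define nx where "nx = (if i = \<Lambda> then 1 else i + 1)"
  define S where "S = R \<oplus> unit_disk"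
  define \<alpha> where "\<alpha> = 2 * pi / \<Lambda>"
  have arc: "arc g" and st: "g 0 = p pr" and fin: "g 1 = p i" and sub: "path_image g \<subseteq> frontier S"
    and avoid: "\<forall>j \<in> {1..\<Lambda>}. j \<noteq> i \<and> j \<noteq> pr \<longrightarrow> p j \<notin> path_image g"
    and nv: "norm v = 1"
    and beta: "(7 * (1 / \<Lambda> + \<epsilon>) \<le> ang (p i - ctr) v \<and> ang (p i - ctr) v \<le> pi - 7 * (1 / \<Lambda> + \<epsilon>)) \<or>
             (pi + 7 * (1 / \<Lambda> + \<epsilon>) \<le> ang (p i - ctr) v \<and> ang (p i - ctr) v \<le> 2 * pi - 7 * (1 / \<Lambda> + \<epsilon>))"
    using H unfolding pr_def S_def pathstart_def pathfinish_def by blast+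
  have prr: "pr \<in> {1..\<Lambda>}" "nx \<in> {1..\<Lambda>}" "nx \<noteq> i" "nx \<noteq> pr" using i Lam by (auto simp: pr_def nx_def)
  have angp: "ang (p (if j = 1 then \<Lambda> else j - 1) - ctr) (p j - ctr) = \<alpha>" if "j \<in> {1..\<Lambda>}" for j
  proof (cases "j = 1")
    case True thus ?thesis using p_ang1 unfolding \<alpha>_def by simp
  next
    case False thus ?thesis using p_ang[of j] that unfolding \<alpha>_def by simp
  qed
  have "(if nx = 1 then \<Lambda> else nx - 1) = i" using i Lam by (auto simp: nx_def)
  hence A1: "Arg2pi ((p i - ctr) / (p nx - ctr)) = \<alpha>" using angp[OF prr(2)] by (simp add: ang_def)
  have A2: "Arg2pi ((p pr - ctr) / (p i - ctr)) = \<alpha>" using angp[OF i] by (simp add: ang_def pr_def)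
  have apos: "0 < \<alpha>" "\<alpha> \<le> pi / 5" using Lam pi_gt_zero unfolding \<alpha>_def by (auto simp: field_simps)
  have Rb: "\<forall>r\<in>R. norm (r - ctr) \<le> \<epsilon>"
  proof
    fix r assume "r \<in> R"
    hence "r \<in> axis_square ctr \<epsilon>" using R(3) by auto
    hence "\<bar>Re (r - ctr)\<bar> \<le> \<epsilon> / 2" "\<bar>Im (r - ctr)\<bar> \<le> \<epsilon> / 2" unfolding axis_square_def by auto
    thus "norm (r - ctr) \<le> \<epsilon>" using cmod_le[of "r - ctr"] by linarith
  qed
  have "closed R" using R(1) unfolding circular_domain_def by blast
  moreover have "bounded R"
  proof (rule bounded_subset[OF bounded_cball])
    show "R \<subseteq> cball ctr \<epsilon>" using Rb by (auto simp: dist_norm norm_minus_commute)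
  qed
  ultimately have cR: "compact R" by (simp add: compact_eq_bounded_closed)
  obtain r0 where r0: "r0 \<in> R" using R(2) by auto
  have fc: "z \<noteq> ctr" if "z \<in> frontier S" for z
  proof -
    have "1 - \<epsilon> \<le> norm (z - ctr)" using frontier_far[of R r0 ctr \<epsilon> z] cR r0 Rb that unfolding S_def by blast
    thus ?thesis using eps by auto
  qed
  have pf: "p j \<in> frontier S" if "j \<in> {1..\<Lambda>}" for j using p_bd[OF that] unfolding S_def by blast
  define P where "P = p nx - ctr"
  have P0: "P \<noteq> 0" using fc[OF pf[OF prr(2)]] unfolding P_def by simp
  define W where "W = P / of_real (norm P)"
  have nW: "norm W = 1" unfolding W_def using P0 by (simp add: norm_divide)
  define \<psi> where "\<psi> z = Arg2pi ((z - ctr) / P)" for z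
  have sgnp: "sgn (z - ctr) = W * cis (\<psi> z)" if "z \<in> frontier S" for z
    unfolding W_def \<psi>_def using sgn_arg[of "z - ctr" P] fc[OF that] P0 by simp
  have ray: "x = y" if "x \<in> frontier S" "y \<in> frontier S" "\<psi> x = \<psi> y" for x y
  proof -
    have e: "sgn (x - ctr) = sgn (y - ctr)" using sgnp[OF that(1)] sgnp[OF that(2)] that(3) by simp
    have "norm (y - ctr) - norm (x - ctr) \<le> 0" "norm (x - ctr) - norm (y - ctr) \<le> 0"
      using K1[OF cR Rb _ that(1)[unfolded S_def] that(2)[unfolded S_def] fc[OF that(1)] fc[OF that(2)]]
        K1[OF cR Rb _ that(2)[unfolded S_def] that(1)[unfolded S_def] fc[OF that(2)] fc[OF that(1)]] eps e by auto
    hence "norm (x - ctr) = norm (y - ctr)" by simp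
    hence "x - ctr = y - ctr" using e norm_scaleR_sgn[of "x - ctr"] norm_scaleR_sgn[of "y - ctr"] by metis
    thus ?thesis by simp
  qed
  have psi_i: "\<psi> (p i) = \<alpha>" using A1 unfolding \<psi>_def P_def .
  have psi_nx: "\<psi> (p nx) = 0" unfolding \<psi>_def P_def[symmetric] using P0 Arg2pi_of_real[of 1] by simp
  have psi_pr: "\<psi> (p pr) = 2 * \<alpha>"
  proof -
    have m: "(p pr - ctr) / P = ((p pr - ctr) / (p i - ctr)) * ((p i - ctr) / P)"
      using fc[OF pf[OF i]] by simp
    have nz: "(p pr - ctr) / (p i - ctr) \<noteq> 0" "(p i - ctr) / P \<noteq> 0"
      using fc[OF pf[OF i]] fc[OF pf[OF prr(1)]] P0 by auto
    have s2: "\<alpha> + \<alpha> < 2 * pi" using apos pi_gt_zero by linarith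
    have A1': "Arg2pi ((p i - ctr) / P) = \<alpha>" using A1 unfolding P_def .
    have "Arg2pi (((p pr - ctr) / (p i - ctr)) * ((p i - ctr) / P)) = \<alpha> + \<alpha>"
      using Arg2pi_times[OF nz] A2 A1' s2 by simp
    thus ?thesis unfolding \<psi>_def m by simp
  qed
  have gf: "g t \<in> frontier S" if "t \<in> {0..1}" for t using sub that unfolding path_image_def by auto
  have inj: "inj_on g {0..1}" using arc unfolding arc_def by blast
  have pth: "path g" using arc by (rule arc_imp_path)
  have pnx: "p nx \<notin> path_image g" using avoid prr(2,3,4) by simp
  have notnx: "g t \<noteq> p nx" if "t \<in> {0..1}" for t
  proof
    assume "g t = p nx"
    moreover have "g t \<in> path_image g" using that unfolding path_image_def by simp
    ultimately show False using pnx by simp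
  qed
  have cont: "continuous_on {0..1} (\<lambda>t. \<psi> (g t))"
  proof -
    have c1: "continuous_on (- \<real>\<^sub>\<ge>\<^sub>0) Arg2pi"
      by (intro continuous_at_imp_continuous_on) (auto intro: continuous_at_Arg2pi)
    have c2: "continuous_on {0..1} (\<lambda>t. (g t - ctr) / P)"
      using pth P0 unfolding path_def by (intro continuous_intros) auto
    have "(\<lambda>t. (g t - ctr) / P) ` {0..1} \<subseteq> - \<real>\<^sub>\<ge>\<^sub>0"
    proof
      fix w assume "w \<in> (\<lambda>t. (g t - ctr) / P) ` {0..1}"
      then obtain t where t: "t \<in> {0..1}" "w = (g t - ctr) / P" by auto
      show "w \<in> - \<real>\<^sub>\<ge>\<^sub>0"
      proof
        assume "w \<in> \<real>\<^sub>\<ge>\<^sub>0"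
        hence "Arg2pi w = 0" by (simp add: Arg2pi_eq_0 complex_nonneg_Reals_iff complex_is_Real_iff)
        hence "\<psi> (g t) = \<psi> (p nx)" using psi_nx t unfolding \<psi>_def by simp
        hence "g t = p nx" using ray[OF gf[OF t(1)] pf[OF prr(2)]] by simp
        thus False using notnx[OF t(1)] by simp
      qed
    qed
    thus ?thesis using continuous_on_compose2[OF c1 c2] unfolding \<psi>_def by blast
  qed
  have sector: "\<alpha> \<le> \<psi> (g t) \<and> \<psi> (g t) \<le> 2 * \<alpha>" if t: "t \<in> {0..1}" for t
  proof (rule ccontr)
    assume "\<not> ?thesis"
    hence "\<psi> (g t) < \<alpha> \<or> 2 * \<alpha> < \<psi> (g t)" by linarith
    thus False
    proof
      assume lt: "\<psi> (g t) < \<alpha>"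
      have "continuous_on {0..t} (\<lambda>t. \<psi> (g t))" using t by (intro continuous_on_subset[OF cont]) auto
      moreover have "\<psi> (g t) \<le> \<alpha>" "\<alpha> \<le> \<psi> (g 0)" "0 \<le> t" using lt st psi_pr apos t by auto
      ultimately obtain s where s: "0 \<le> s" "s \<le> t" "\<psi> (g s) = \<alpha>" using IVT2'[of "\<lambda>t. \<psi> (g t)" t \<alpha> 0] by blast
      have "s \<in> {0..1}" using s t by auto
      hence "g s = g 1" using ray[OF gf gf[of 1]] s(3) fin psi_i by auto
      hence "s = 1" using inj \<open>s \<in> {0..1}\<close> unfolding inj_on_def by auto
      hence "t = 1" using s t by auto
      thus False using lt fin psi_i by simp
    next
      assume gt: "2 * \<alpha> < \<psi> (g t)"
      have "continuous_on {t..1} (\<lambda>t. \<psi> (g t))" using t by (intro continuous_on_subset[OF cont]) auto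
      moreover have "\<psi> (g 1) \<le> 2 * \<alpha>" "2 * \<alpha> \<le> \<psi> (g t)" "t \<le> 1" using gt fin psi_i apos t by auto
      ultimately obtain s where s: "t \<le> s" "s \<le> 1" "\<psi> (g s) = 2 * \<alpha>" using IVT2'[of "\<lambda>t. \<psi> (g t)" 1 "2 * \<alpha>" t] by blast
      have "s \<in> {0..1}" using s t by auto
      hence "g s = g 0" using ray[OF gf gf[of 0]] s(3) st psi_pr by auto
      hence "s = 0" using inj \<open>s \<in> {0..1}\<close> unfolding inj_on_def by auto
      hence "t = 0" using s t by auto
      thus False using gt st psi_pr by simp
    qed
  qed
  define \<beta> where "\<beta> = ang (p i - ctr) v"
  have vform: "v = W * cis (\<alpha> - \<beta>)"
  proof -
    define n where "n = norm (p i - ctr)"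
    have n0: "n \<noteq> 0" using fc[OF pf[OF i]] unfolding n_def by simp
    have v0: "v \<noteq> 0" using nv by auto
    have e1: "(p i - ctr) / v = of_real n * cis \<beta>"
      using Arg2pi_eq[of "(p i - ctr) / v"] nv unfolding \<beta>_def ang_def n_def by (simp add: norm_divide cis_conv_exp)
    have e2: "p i - ctr = of_real n * (W * cis \<alpha>)"
      using norm_scaleR_sgn[of "p i - ctr"] sgnp[OF pf[OF i]] psi_i unfolding n_def by (simp add: scaleR_conv_of_real)
    have "of_real n * (W * cis \<alpha>) = of_real n * (v * cis \<beta>)" using e1 e2 v0 by (simp add: field_simps)
    hence "W * cis \<alpha> = v * cis \<beta>" using n0 by simp
    hence "v = W * cis \<alpha> / cis \<beta>" by (simp add: field_simps)
    thus ?thesis by (simp only: times_divide_eq_right[symmetric] cis_divide)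
  qed
  have injv: "inj_on (inner v) (path_image g)"
  proof
    fix x y assume x: "x \<in> path_image g" and y: "y \<in> path_image g" and eq: "inner v x = inner v y"
    obtain tx where tx: "tx \<in> {0..1}" "x = g tx" using x unfolding path_image_def by auto
    obtain ty where ty: "ty \<in> {0..1}" "y = g ty" using y unfolding path_image_def by auto
    have kb: "\<forall>s. 0 \<le> s \<and> s \<le> \<alpha> \<longrightarrow> sin (7 * \<epsilon>) \<le> \<bar>sin (\<beta> + s)\<bar>"
      using kappa_bound[OF eps Lam] beta unfolding \<beta>_def \<alpha>_def by blast
    show "x = y"
      using chord[OF cR Rb R(2) eps gf[OF tx(1), unfolded S_def] gf[OF ty(1), unfolded S_def] nW
        sgnp[OF gf[OF tx(1)]] sgnp[OF gf[OF ty(1)]] _ _ _ _ _ vform kb kappa_ok[OF eps]]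
        sector[OF tx(1)] sector[OF ty(1)] apos eq tx ty pi_gt_zero by auto
  qed
  show "monotone_in_dir v (path_image g)" by (rule mono_from_inj[OF arc injv])
qed

end
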